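(* Let $X$ be a topological space and consider the topological group $C_p(X)$. Then the following properties of $C_p(X)$ are all equivalent: $\alpha_{2^-}$, $\alpha_2$, $\alpha_{3^-}$, $\alpha_3$, $\alpha_4$, locally Ramsey, and Ramsey.
   Context: $C_p(X)$ is the group of continuous real-valued functions on $X$ with the topology of pointwise convergence. Convention: a "sequence" is a countably infinite set; a countably infinite set $A$ converges to $x$ if $x\notin A$ and every neighborhood of $x$ contains all but finitely many elements of $A$. $\lim_m x_{nm}=x$ means $x_{nm}\neq x$ for all $m$ and every neighborhood of $x$ contains $x_{nm}$ for all but finitely many $m$. A space $Y$ is $\alpha_i$ ($i=2,3,4$) if for each $y\in Y$ and all pairwise disjoint sequences $S_1,S_2,\dots\subseteq Y$ each converging to $y$, there is a sequence $S\subseteq\bigcup_nS_n$ converging to $y$ such that, respectively: ($\alpha_2$) $S_n\cap S$ is infinite for all $n$; ($\alpha_3$) $S_n\cap S$ is infinite for infinitely many $n$; ($\alpha_4$) $S_n\cap S$ is nonempty for infinitely many $n$. $Y$ is $\alpha_{2^-}$ if for each $y$, whenever $\lim_m x_{nm}=y$ for all $n$, there are $m_1<m_2<\dots$ with $\bigcup_n\{x_{1m_n},\dots,x_{nm_n}\}$ converging to $y$. $Y$ is $\alpha_{3^-}$ if for each $y$, whenever $\lim_m x_{nm}=y$ for all $n$, there are infinite $I,J\subseteq\mathbb N$ with $\{x_{nm}:n\in I, m\in J, n<m\}$ converging to $y$. $Y$ is locally Ramsey if for each $y$, whenever $\lim_m x_{nm}=y$ for all $n$, there is an infinite $I\subseteq\mathbb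 N$ with $\{x_{nm}: n,m\in I, n<m\}$ converging to $y$. $Y$ is Ramsey if whenever $\lim_m x_{nm}=x_n$ for each $n$ and $\lim_n x_n=y$, there is an infinite $I\subseteq\mathbb N$ such that for each neighborhood $U$ of $y$ there is $k$ with $\{x_{nm}: k<n<m,\ n,m\in I\}\subseteq U$. *)

theory Defs
  imports "HOL-Analysis.Analysis"
begin

text \<open>C_p(X): continuous real-valued functions on X with the topology of pointwise
convergence, i.e. the subspace of the product topology on (topspace X \<rightarrow> real)
(functions are taken extensional, i.e. undefined outside topspace X).\<close>
definition Cp :: "'a topology \<Rightarrow> ('a \<Rightarrow> real) topology" where
  "Cp X = subtopology (product_topology (\<lambda>_. euclideanreal) (topspace X))
            {f \<in> topspace (product_topology (\<lambda>_. euclideanreal) (topspace X)).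
               continuous_map X euclideanreal f}"

text \<open>A sequence (countably infinite set) A converging to y.\<close>
definition conv_set :: "'b topology \<Rightarrow> 'b set \<Rightarrow> 'b \<Rightarrow> bool" where
  "conv_set Y A y \<longleftrightarrow> A \<subseteq> topspace Y \<and> countable A \<and> infinite A \<and> y \<notin> A \<and>
     (\<forall>U. openin Y U \<and> y \<in> U \<longrightarrow> finite (A - U))"

definition seq_lim :: "'b topology \<Rightarrow> (nat \<Rightarrow> 'b) \<Rightarrow> 'b \<Rightarrow> bool" where
  "seq_lim Y x y \<longleftrightarrow> (\<forall>m. x m \<in> topspace Y \<and> x m \<noteq> y) \<and>
     (\<forall>U. openin Y U \<and> y \<in> U \<longrightarrow> (\<forall>\<^sub>F m in sequentially. x m \<in> U))"

definition alpha2 :: "'b topology \<Rightarrow> bool" where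
  "alpha2 Y \<longleftrightarrow> (\<forall>y \<in> topspace Y. \<forall>S :: nat \<Rightarrow> 'b set.
     (\<forall>n m. n \<noteq> m \<longrightarrow> S n \<inter> S m = {}) \<and> (\<forall>n. conv_set Y (S n) y) \<longrightarrow>
     (\<exists>T. T \<subseteq> (\<Union>n. S n) \<and> conv_set Y T y \<and> (\<forall>n. infinite (S n \<inter> T))))"

definition alpha3 :: "'b topology \<Rightarrow> bool" where
  "alpha3 Y \<longleftrightarrow> (\<forall>y \<in> topspace Y. \<forall>S :: nat \<Rightarrow> 'b set.
     (\<forall>n m. n \<noteq> m \<longrightarrow> S n \<inter> S m = {}) \<and> (\<forall>n. conv_set Y (S n) y) \<longrightarrow>
     (\<exists>T. T \<subseteq> (\<Union>n. S n) \<and> conv_set Y T y \<and> infinite {n. infinite (S n \<inter> T)}))"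

definition alpha4 :: "'b topology \<Rightarrow> bool" where
  "alpha4 Y \<longleftrightarrow> (\<forall>y \<in> topspace Y. \<forall>S :: nat \<Rightarrow> 'b set.
     (\<forall>n m. n \<noteq> m \<longrightarrow> S n \<inter> S m = {}) \<and> (\<forall>n. conv_set Y (S n) y) \<longrightarrow>
     (\<exists>T. T \<subseteq> (\<Union>n. S n) \<and> conv_set Y T y \<and> infinite {n. S n \<inter> T \<noteq> {}}))"

text \<open>Indices start at 0 here; {x_1m_n,...,x_nm_n} becomes {x k (m n) | k \<le> n}.\<close>
definition alpha2m :: "'b topology \<Rightarrow> bool" where
  "alpha2m Y \<longleftrightarrow> (\<forall>y \<in> topspace Y. \<forall>x :: nat \<Rightarrow> nat \<Rightarrow> 'b.
     (\<forall>n. seq_lim Y (x n) y) \<longrightarrow>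
     (\<exists>m :: nat \<Rightarrow> nat. strict_mono m \<and>
        conv_set Y (\<Union>n. {x k (m n) | k. k \<le> n}) y))"

definition alpha3m :: "'b topology \<Rightarrow> bool" where
  "alpha3m Y \<longleftrightarrow> (\<forall>y \<in> topspace Y. \<forall>x :: nat \<Rightarrow> nat \<Rightarrow> 'b.
     (\<forall>n. seq_lim Y (x n) y) \<longrightarrow>
     (\<exists>I J :: nat set. infinite I \<and> infinite J \<and>
        conv_set Y {x n m | n m. n \<in> I \<and> m \<in> J \<and> n < m} y))"

definition locally_Ramsey :: "'b topology \<Rightarrow> bool" where
  "locally_Ramsey Y \<longleftrightarrow> (\<forall>y \<in> topspace Y. \<forall>x :: nat \<Rightarrow> nat \<Rightarrow> 'b.
     (\<forall>n. seq_lim Y (x n) y) \<longrightarrow>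
     (\<exists>I :: nat set. infinite I \<and>
        conv_set Y {x n m | n m. n \<in> I \<and> m \<in> I \<and> n < m} y))"

definition Ramsey :: "'b topology \<Rightarrow> bool" where
  "Ramsey Y \<longleftrightarrow> (\<forall>y \<in> topspace Y. \<forall>x :: nat \<Rightarrow> nat \<Rightarrow> 'b. \<forall>z :: nat \<Rightarrow> 'b.
     (\<forall>n. seq_lim Y (x n) (z n)) \<and> seq_lim Y z y \<longrightarrow>
     (\<exists>I :: nat set. infinite I \<and>
        (\<forall>U. openin Y U \<and> y \<in> U \<longrightarrow>
           (\<exists>k. {x n m | n m. k < n \<and> n < m \<and> n \<in> I \<and> m \<in> I} \<subseteq> U))))"

end

theory Submission
  imports Defs
begin

lemma cp_topspace:
  "topspace (Cp X) = {f. f \<in> extensional (topspace X) \<and> continuous_map X euclideanreal f}"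
  unfolding Cp_def by (auto simp: PiE_def)

lemma cp_open_coord:
  assumes "p \<in> topspace X"
  shows "openin (Cp X) {f \<in> topspace (Cp X). \<bar>f p - y p\<bar> < e}"
proof -
  have "continuous_map (Cp X) euclideanreal (\<lambda>f. f p)"
    unfolding Cp_def
    by (rule continuous_map_from_subtopology) (use assms in \<open>auto intro: continuous_map_product_projection[where X="\<lambda>_. euclideanreal", simplified]\<close>)
  moreover have "openin euclideanreal {r. \<bar>r - y p\<bar> < e}"
  proof -
    have "{r. \<bar>r - y p\<bar> < e} = ball (y p) e" by (auto simp: dist_real_def ball_def)
    then show ?thesis by simp
  qed
  ultimately show ?thesis using openin_continuous_map_preimage by fastforce
qed

lemma cp_nbhd:
  assumes "openin (Cp X) U" "y \<in> U"
  shows "\<exists>F e. finite F \<and> F \<subseteq> topspace X \<and> e > 0 \<and>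
     (\<forall>f\<in>topspace (Cp X). (\<forall>p\<in>F. \<bar>f p - y p\<bar> < e) \<longrightarrow> f \<in> U)"
proof -
  define P where "P = product_topology (\<lambda>_. euclideanreal) (topspace X)"
  define S where "S = {f \<in> topspace P. continuous_map X euclideanreal f}"
  have CpE: "Cp X = subtopology P S" unfolding Cp_def P_def S_def by simp
  obtain V where V: "openin P V" "U = S \<inter> V"
    using assms(1) unfolding CpE openin_subtopology by auto
  have "y \<in> V" using V assms by auto
  then obtain W where W: "finite {i \<in> topspace X. W i \<noteq> topspace euclideanreal}"
     "\<forall>i\<in>topspace X. openin euclideanreal (W i)" "y \<in> Pi\<^sub>E (topspace X) W" "Pi\<^sub>E (topspace X) W \<subseteq> V"
    using V(1) unfolding P_def openin_product_topology_alt by blast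
  define F where "F = {i \<in> topspace X. W i \<noteq> topspace euclideanreal}"
  have "\<forall>i\<in>F. \<exists>d>0. ball (y i) d \<subseteq> W i"
  proof
    fix i assume "i \<in> F"
    then have "open (W i)" "y i \<in> W i" using W F_def by (auto simp: PiE_def)
    then show "\<exists>d>0. ball (y i) d \<subseteq> W i" using openE by blast
  qed
  then obtain d where d: "\<forall>i\<in>F. d i > 0 \<and> ball (y i) (d i) \<subseteq> W i" by metis
  define e where "e = Min (insert 1 (d ` F))"
  have fF: "finite F" using W F_def by simp
  have e0: "e > 0" unfolding e_def using fF d by (auto simp: Min_gr_iff)
  have ed: "\<forall>i\<in>F. e \<le> d i" unfolding e_def using fF by auto
  show ?thesis
  proof (intro exI conjI)
    show "finite F" "F \<subseteq> topspace X" "e > 0" using fF e0 F_def by auto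
    show "\<forall>f\<in>topspace (Cp X). (\<forall>p\<in>F. \<bar>f p - y p\<bar> < e) \<longrightarrow> f \<in> U"
    proof (intro ballI impI)
      fix f assume f: "f \<in> topspace (Cp X)" and fe: "\<forall>p\<in>F. \<bar>f p - y p\<bar> < e"
      have fS: "f \<in> S" using f unfolding CpE by simp
      have "f \<in> Pi\<^sub>E (topspace X) W"
      proof (rule PiE_I)
        fix i assume i: "i \<in> topspace X"
        show "f i \<in> W i"
        proof (cases "i \<in> F")
          case True
          then have "\<bar>f i - y i\<bar> < d i" using fe ed by force
          then have "f i \<in> ball (y i) (d i)" by (simp add: dist_real_def ball_def abs_minus_commute)
          moreover have "ball (y i) (d i) \<subseteq> W i" using d True by auto
          ultimately show ?thesis by blast
        next
          case False then show ?thesis using i F_def by auto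
        qed
      next
        fix i assume "i \<notin> topspace X"
        then show "f i = undefined" using fS unfolding S_def P_def by (auto simp: PiE_def extensional_def)
      qed
      then show "f \<in> U" using W V fS by auto
    qed
  qed
qed

lemma cp_Hausdorff: "Hausdorff_space (Cp X)"
  unfolding Cp_def
  by (intro Hausdorff_space_subtopology) (simp add: Hausdorff_space_product_topology)

lemma cp_ext_eq:
  assumes "f \<in> topspace (Cp X)" "g \<in> topspace (Cp X)" "\<And>p. p \<in> topspace X \<Longrightarrow> f p = g p"
  shows "f = g"
  using assms unfolding cp_topspace by (auto intro: extensionalityI)

lemma seq_lim_cp_iff:
  assumes y: "y \<in> topspace (Cp X)"
  shows "seq_lim (Cp X) s y \<longleftrightarrow> (\<forall>m. s m \<in> topspace (Cp X) \<and> s m \<noteq> y) \<and>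
          (\<forall>p\<in>topspace X. (\<lambda>m. s m p) \<longlonglongrightarrow> y p)"
proof
  assume L: "seq_lim (Cp X) s y"
  show "(\<forall>m. s m \<in> topspace (Cp X) \<and> s m \<noteq> y) \<and> (\<forall>p\<in>topspace X. (\<lambda>m. s m p) \<longlonglongrightarrow> y p)"
  proof (intro conjI ballI)
    show "\<forall>m. s m \<in> topspace (Cp X) \<and> s m \<noteq> y" using L unfolding seq_lim_def by auto
    fix p assume p: "p \<in> topspace X"
    show "(\<lambda>m. s m p) \<longlonglongrightarrow> y p"
      unfolding tendsto_iff dist_real_def
    proof (intro allI impI)
      fix e :: real assume "e > 0"
      then have "openin (Cp X) {f \<in> topspace (Cp X). \<bar>f p - y p\<bar> < e}" "y \<in> {f \<in> topspace (Cp X). \<bar>f p - y p\<bar> < e}"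
        using cp_open_coord[OF p] y by auto
      then have "\<forall>\<^sub>F m in sequentially. s m \<in> {f \<in> topspace (Cp X). \<bar>f p - y p\<bar> < e}"
        using L unfolding seq_lim_def by blast
      then show "\<forall>\<^sub>F m in sequentially. \<bar>s m p - y p\<bar> < e" by (rule eventually_mono) auto
    qed
  qed
next
  assume R: "(\<forall>m. s m \<in> topspace (Cp X) \<and> s m \<noteq> y) \<and> (\<forall>p\<in>topspace X. (\<lambda>m. s m p) \<longlonglongrightarrow> y p)"
  show "seq_lim (Cp X) s y"
    unfolding seq_lim_def
  proof (rule conjI)
    show "\<forall>m. s m \<in> topspace (Cp X) \<and> s m \<noteq> y" by (rule conjunct1[OF R])
    have Rt: "\<forall>p\<in>topspace X. (\<lambda>m. s m p) \<longlonglongrightarrow> y p" by (rule conjunct2[OF R])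
    have Rs: "\<And>m. s m \<in> topspace (Cp X)" using conjunct1[OF R] by blast
    show "\<forall>U. openin (Cp X) U \<and> y \<in> U \<longrightarrow> (\<forall>\<^sub>F m in sequentially. s m \<in> U)"
    proof (intro allI impI)
    fix U assume U: "openin (Cp X) U \<and> y \<in> U"
    then obtain F e where F: "finite F" "F \<subseteq> topspace X" "e > 0"
       "\<forall>f\<in>topspace (Cp X). (\<forall>p\<in>F. \<bar>f p - y p\<bar> < e) \<longrightarrow> f \<in> U"
      using cp_nbhd[of X U y] U by blast
    have "\<forall>p\<in>F. \<forall>\<^sub>F m in sequentially. \<bar>s m p - y p\<bar> < e"
    proof
      fix p assume "p \<in> F"
      then have "p \<in> topspace X" using F(2) by blast
      then have "(\<lambda>m. s m p) \<longlonglongrightarrow> y p" using Rt by blast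
      then have "\<forall>\<^sub>F m in sequentially. dist (s m p) (y p) < e" using F(3) unfolding tendsto_iff by blast
      then show "\<forall>\<^sub>F m in sequentially. \<bar>s m p - y p\<bar> < e" by (simp add: dist_real_def)
    qed
    then have "\<forall>\<^sub>F m in sequentially. \<forall>p\<in>F. \<bar>s m p - y p\<bar> < e"
      by (rule eventually_ball_finite[OF F(1)])
    then show "\<forall>\<^sub>F m in sequentially. s m \<in> U"
    proof (rule eventually_mono)
      fix m assume "\<forall>p\<in>F. \<bar>s m p - y p\<bar> < e"
      then show "s m \<in> U" using F(4) Rs[of m] by blast
    qed
  qed
  qed
qed

lemma conv_set_cp_I:
  assumes y: "y \<in> topspace (Cp X)" and A: "A \<subseteq> topspace (Cp X)" "countable A" "infinite A" "y \<notin> A"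
    and P: "\<And>p e. p \<in> topspace X \<Longrightarrow> e > 0 \<Longrightarrow> finite {f\<in>A. \<bar>f p - y p\<bar> \<ge> e}"
  shows "conv_set (Cp X) A y"
  unfolding conv_set_def
proof (intro conjI)
  show "A \<subseteq> topspace (Cp X)" "countable A" "infinite A" "y \<notin> A" by (fact A)+
  show "\<forall>U. openin (Cp X) U \<and> y \<in> U \<longrightarrow> finite (A - U)"
  proof (intro allI impI)
  fix U assume U: "openin (Cp X) U \<and> y \<in> U"
  then obtain F e where F: "finite F" "F \<subseteq> topspace X" "e > 0"
     "\<forall>f\<in>topspace (Cp X). (\<forall>p\<in>F. \<bar>f p - y p\<bar> < e) \<longrightarrow> f \<in> U"
    using cp_nbhd[of X U y] U by blast
  have "A - U \<subseteq> (\<Union>p\<in>F. {f\<in>A. \<bar>f p - y p\<bar> \<ge> e})"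
  proof
    fix f assume f: "f \<in> A - U"
    then have "\<not> (\<forall>p\<in>F. \<bar>f p - y p\<bar> < e)" using F(4) A(1) by blast
    then show "f \<in> (\<Union>p\<in>F. {f\<in>A. \<bar>f p - y p\<bar> \<ge> e})" using f by force
  qed
  moreover have "finite (\<Union>p\<in>F. {f\<in>A. \<bar>f p - y p\<bar> \<ge> e})"
  proof (rule finite_UN_I)
    show "finite F" by (fact F(1))
    fix p assume "p \<in> F" then show "finite {f\<in>A. \<bar>f p - y p\<bar> \<ge> e}" using F(2,3) P by blast
  qed
  ultimately show "finite (A - U)" by (rule finite_subset)
  qed
qed

lemma seq_lim_range_infinite:
  assumes H: "Hausdorff_space Y" and y: "y \<in> topspace Y" and L: "seq_lim Y s y"
  shows "infinite (range s)"
proof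
  assume fin: "finite (range s)"
  have sub: "range s \<subseteq> topspace Y" using L unfolding seq_lim_def by auto
  have "closedin Y (range s)"
    using fin sub Hausdorff_imp_t1_space[OF H] t1_space_closedin_finite by blast
  then have "openin Y (topspace Y - range s)" by auto
  moreover have "y \<in> topspace Y - range s" using y L unfolding seq_lim_def by auto
  ultimately have "\<forall>\<^sub>F m in sequentially. s m \<in> topspace Y - range s"
    using L unfolding seq_lim_def by blast
  then obtain N where "s N \<in> topspace Y - range s" by (auto simp: eventually_sequentially)
  then show False by blast
qed

lemma seq_lim_conv_set:
  assumes H: "Hausdorff_space Y" and y: "y \<in> topspace Y" and L: "seq_lim Y s y"
  shows "conv_set Y (range s) y"
  unfolding conv_set_def
proof (intro conjI allI impI)
  show "range s \<subseteq> topspace Y" "y \<notin> range s" using L unfolding seq_lim_def by auto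
  show "countable (range s)" by simp
  show "infinite (range s)" using seq_lim_range_infinite[OF assms] .
  fix U assume "openin Y U \<and> y \<in> U"
  then have "\<forall>\<^sub>F m in sequentially. s m \<in> U" using L unfolding seq_lim_def by blast
  then have "finite {m. s m \<notin> U}" by (simp add: cofinite_eq_sequentially[symmetric] eventually_cofinite)
  moreover have "range s - U \<subseteq> s ` {m. s m \<notin> U}" by auto
  ultimately show "finite (range s - U)" using finite_subset by blast
qed

lemma seq_lim_subseq:
  assumes "seq_lim Y s y" "strict_mono r"
  shows "seq_lim Y (s \<circ> r) y"
  using assms unfolding seq_lim_def by (auto intro: eventually_subseq)

lemma conv_set_enum:
  assumes "conv_set Y A y"
  shows "\<exists>e. inj e \<and> range e = A \<and> seq_lim Y e y"
proof -
  have b: "bij_betw (from_nat_into A) UNIV A"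
    using assms unfolding conv_set_def by (intro bij_betw_from_nat_into) auto
  define e where "e = from_nat_into A"
  have ie: "inj e" "range e = A" using b unfolding e_def bij_betw_def by auto
  have "seq_lim Y e y"
    unfolding seq_lim_def
  proof (rule conjI)
    show "\<forall>m. e m \<in> topspace Y \<and> e m \<noteq> y" using ie assms unfolding conv_set_def by auto
    show "\<forall>U. openin Y U \<and> y \<in> U \<longrightarrow> (\<forall>\<^sub>F m in sequentially. e m \<in> U)"
    proof (intro allI impI)
    fix U assume "openin Y U \<and> y \<in> U"
    then have "finite (A - U)" using assms unfolding conv_set_def by blast
    then have "finite (e -` (A - U))" using ie(1) by (simp add: finite_vimageI)
    moreover have "{m. e m \<notin> U} \<subseteq> e -` (A - U)" using ie by auto
    ultimately have "finite {m. e m \<notin> U}" using finite_subset by blast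
    then show "\<forall>\<^sub>F m in sequentially. e m \<in> U"
      by (simp add: cofinite_eq_sequentially[symmetric] eventually_cofinite)
  qed
  qed
  then show ?thesis using ie by blast
qed

lemma conv_set_inj_eventually:
  assumes "conv_set Y T y" "inj s" "range s \<subseteq> T" "openin Y U" "y \<in> U"
  shows "\<forall>\<^sub>F m in sequentially. s m \<in> U"
proof -
  have "finite (T - U)" using assms unfolding conv_set_def by blast
  then have "finite (s -` (T - U))" using assms(2) by (simp add: finite_vimageI)
  moreover have "{m. s m \<notin> U} \<subseteq> s -` (T - U)" using assms(3) by auto
  ultimately have "finite {m. s m \<notin> U}" using finite_subset by blast
  then show ?thesis by (simp add: cofinite_eq_sequentially[symmetric] eventually_cofinite)
qed

lemma a2_a3: "alpha2 Y \<Longrightarrow> alpha3 Y"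
  unfolding alpha3_def
proof (intro ballI allI impI)
  fix y and S :: "nat \<Rightarrow> _" assume A: "alpha2 Y"
    and y: "y \<in> topspace Y" and H: "(\<forall>n m. n \<noteq> m \<longrightarrow> S n \<inter> S m = {}) \<and> (\<forall>n. conv_set Y (S n) y)"
  have "\<forall>S :: nat \<Rightarrow> _ set. (\<forall>n m. n \<noteq> m \<longrightarrow> S n \<inter> S m = {}) \<and> (\<forall>n. conv_set Y (S n) y) \<longrightarrow>
     (\<exists>T. T \<subseteq> (\<Union>n. S n) \<and> conv_set Y T y \<and> (\<forall>n. infinite (S n \<inter> T)))"
    using A y unfolding alpha2_def by (rule bspec)
  from mp[OF spec[OF this, of S] H] obtain T where T: "T\<subseteq>\<Union> (range S)" "conv_set Y T y" "\<forall>n. infinite (S n \<inter> T)"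
    by blast
  have "{n. infinite (S n \<inter> T)} = UNIV" using T(3) by blast
  then have "infinite {n. infinite (S n \<inter> T)}" by simp
  then show "\<exists>T\<subseteq>\<Union> (range S). conv_set Y T y \<and> infinite {n. infinite (S n \<inter> T)}" using T(1,2) by blast
qed

lemma a3_a4: "alpha3 Y \<Longrightarrow> alpha4 Y"
  unfolding alpha4_def
proof (intro ballI allI impI)
  fix y and S :: "nat \<Rightarrow> _" assume A: "alpha3 Y"
    and y: "y \<in> topspace Y" and H: "(\<forall>n m. n \<noteq> m \<longrightarrow> S n \<inter> S m = {}) \<and> (\<forall>n. conv_set Y (S n) y)"
  have "\<forall>S :: nat \<Rightarrow> _ set. (\<forall>n m. n \<noteq> m \<longrightarrow> S n \<inter> S m = {}) \<and> (\<forall>n. conv_set Y (S n) y) \<longrightarrow>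
     (\<exists>T. T \<subseteq> (\<Union>n. S n) \<and> conv_set Y T y \<and> infinite {n. infinite (S n \<inter> T)})"
    using A y unfolding alpha3_def by (rule bspec)
  from mp[OF spec[OF this, of S] H] obtain T where T: "T\<subseteq>\<Union> (range S)" "conv_set Y T y" "infinite {n. infinite (S n \<inter> T)}"
    by blast
  have "{n. infinite (S n \<inter> T)} \<subseteq> {n. S n \<inter> T \<noteq> {}}" by auto
  then have "infinite {n. S n \<inter> T \<noteq> {}}" using T(3) finite_subset by blast
  then show "\<exists>T\<subseteq>\<Union> (range S). conv_set Y T y \<and> infinite {n. S n \<inter> T \<noteq> {}}" using T by blast
qed

lemma LR_a3m: "locally_Ramsey Y \<Longrightarrow> alpha3m Y"
  unfolding locally_Ramsey_def alpha3m_def by blast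

lemma a3m_a4: "alpha3m Y \<Longrightarrow> alpha4 Y"
  unfolding alpha4_def
proof (intro ballI allI impI)
  fix y and S :: "nat \<Rightarrow> _" assume A: "alpha3m Y" and y: "y \<in> topspace Y"
    and H: "(\<forall>n m. n \<noteq> m \<longrightarrow> S n \<inter> S m = {}) \<and> (\<forall>n. conv_set Y (S n) y)"
  have "\<forall>n. \<exists>e. inj e \<and> range e = S n \<and> seq_lim Y e y"
  proof
    fix n show "\<exists>e. inj e \<and> range e = S n \<and> seq_lim Y e y" using H by (intro conv_set_enum) blast
  qed
  from choice[OF this] obtain e where e: "\<forall>n. inj (e n) \<and> range (e n) = S n \<and> seq_lim Y (e n) y" by blast
  then have e: "\<And>n. inj (e n)" "\<And>n. range (e n) = S n" "\<And>n. seq_lim Y (e n) y" by auto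
  obtain I J :: "nat set" where IJ: "infinite I" "infinite J" "conv_set Y {e n m | n m. n \<in> I \<and> m \<in> J \<and> n < m} y"
  proof -
    have "\<forall>x :: nat \<Rightarrow> nat \<Rightarrow> _. (\<forall>n. seq_lim Y (x n) y) \<longrightarrow> (\<exists>I J :: nat set. infinite I \<and> infinite J \<and> conv_set Y {x n m | n m. n \<in> I \<and> m \<in> J \<and> n < m} y)"
      using A y unfolding alpha3m_def by (rule bspec)
    from mp[OF spec[OF this, of e]] e(3) show ?thesis using that by blast
  qed
  define T where "T = {e n m | n m. n \<in> I \<and> m \<in> J \<and> n < m}"
  have "T \<subseteq> \<Union> (range S)" unfolding T_def e(2)[symmetric] by blast
  moreover have "I \<subseteq> {n. S n \<inter> T \<noteq> {}}"
  proof
    fix n assume n: "n \<in> I"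
    obtain m where m: "m \<in> J" "m > n" using IJ(2) by (meson infinite_nat_iff_unbounded)
    have "e n m \<in> S n \<inter> T" unfolding T_def e(2)[symmetric] using n m by blast
    then show "n \<in> {n. S n \<inter> T \<noteq> {}}" by blast
  qed
  then have "infinite {n. S n \<inter> T \<noteq> {}}" using IJ(1) finite_subset by blast
  ultimately show "\<exists>T\<subseteq>\<Union> (range S). conv_set Y T y \<and> infinite {n. S n \<inter> T \<noteq> {}}"
    using IJ(3) unfolding T_def by blast
qed

lemma a2m_a2: "alpha2m Y \<Longrightarrow> alpha2 Y"
  unfolding alpha2_def
proof (intro ballI allI impI)
  fix y and S :: "nat \<Rightarrow> _" assume A: "alpha2m Y" and y: "y \<in> topspace Y"
    and H: "(\<forall>n m. n \<noteq> m \<longrightarrow> S n \<inter> S m = {}) \<and> (\<forall>n. conv_set Y (S n) y)"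
  have "\<forall>n. \<exists>e. inj e \<and> range e = S n \<and> seq_lim Y e y"
  proof
    fix n show "\<exists>e. inj e \<and> range e = S n \<and> seq_lim Y e y" using H by (intro conv_set_enum) blast
  qed
  from choice[OF this] obtain e where e: "\<forall>n. inj (e n) \<and> range (e n) = S n \<and> seq_lim Y (e n) y" by blast
  then have e: "\<And>n. inj (e n)" "\<And>n. range (e n) = S n" "\<And>n. seq_lim Y (e n) y" by auto
  obtain m :: "nat \<Rightarrow> nat" where m: "strict_mono m" "conv_set Y (\<Union>n. {e k (m n) | k. k \<le> n}) y"
  proof -
    have "\<forall>x :: nat \<Rightarrow> nat \<Rightarrow> _. (\<forall>n. seq_lim Y (x n) y) \<longrightarrow> (\<exists>m :: nat \<Rightarrow> nat. strict_mono m \<and> conv_set Y (\<Union>n. {x k (m n) | k. k \<le> n}) y)"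
      using A y unfolding alpha2m_def by (rule bspec)
    from mp[OF spec[OF this, of e]] e(3) show ?thesis using that by blast
  qed
  define T where "T = (\<Union>n. {e k (m n) | k. k \<le> n})"
  have "T \<subseteq> \<Union> (range S)" unfolding T_def e(2)[symmetric] by blast
  moreover have "infinite (S k \<inter> T)" for k
  proof -
    have "(\<lambda>n. e k (m n)) ` {k..} \<subseteq> S k \<inter> T" unfolding T_def e(2)[symmetric] by blast
    moreover have "inj_on (\<lambda>n. e k (m n)) {k..}"
    proof (rule inj_onI)
      fix a b assume "e k (m a) = e k (m b)"
      then have "m a = m b" using e(1)[of k] by (simp add: inj_eq)
      then show "a = b" using strict_mono_eq[OF m(1)] by blast
    qed
    then have "infinite ((\<lambda>n. e k (m n)) ` {k..})"
      using finite_imageD[of "\<lambda>n. e k (m n)" "{k..}"] infinite_Ici[of k] by blast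
    ultimately show ?thesis using finite_subset by blast
  qed
  ultimately show "\<exists>T\<subseteq>\<Union> (range S). conv_set Y T y \<and> (\<forall>n. infinite (S n \<inter> T))"
    using m(2) unfolding T_def by blast
qed

definition PP :: "'a topology \<Rightarrow> bool" where
  "PP X \<longleftrightarrow> (\<forall>G :: nat \<Rightarrow> nat \<Rightarrow> 'a \<Rightarrow> real.
     (\<forall>n m. continuous_map X euclideanreal (G n m)) \<and> (\<forall>n m p. 0 \<le> G n m p) \<and>
     (\<forall>n. \<forall>p\<in>topspace X. (\<lambda>m. G n m p) \<longlonglongrightarrow> 0) \<longrightarrow>
     (\<exists>\<mu> :: nat \<Rightarrow> nat. strict_mono \<mu> \<and> (\<forall>p\<in>topspace X. (\<lambda>n. G n (\<mu> n) p) \<longlonglongrightarrow> 0)))"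

lemma PP_D:
  fixes G :: "nat \<Rightarrow> nat \<Rightarrow> 'a \<Rightarrow> real"
  assumes "PP X" "\<And>n m. continuous_map X euclideanreal (G n m)" "\<And>n m p. 0 \<le> G n m p"
    "\<And>n p. p \<in> topspace X \<Longrightarrow> (\<lambda>m. G n m p) \<longlonglongrightarrow> 0"
  obtains \<mu> where "strict_mono \<mu>" "\<And>p. p \<in> topspace X \<Longrightarrow> (\<lambda>n. G n (\<mu> n) p) \<longlonglongrightarrow> 0"
proof -
  have "(\<forall>n m. continuous_map X euclideanreal (G n m)) \<and> (\<forall>n m p. 0 \<le> G n m p) \<and>
     (\<forall>n. \<forall>p\<in>topspace X. (\<lambda>m. G n m p) \<longlonglongrightarrow> 0)" using assms(2-4) by blast
  from mp[OF spec[OF assms(1)[unfolded PP_def], of G] this] obtain \<mu> where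
    "strict_mono \<mu>" "\<forall>p\<in>topspace X. (\<lambda>n. G n (\<mu> n) p) \<longlonglongrightarrow> 0" by blast
  then show ?thesis using that by blast
qed

lemma sandwich0:
  fixes f g :: "nat \<Rightarrow> real"
  assumes "\<And>n. 0 \<le> f n" "\<And>n. f n \<le> g n" "g \<longlonglongrightarrow> 0"
  shows "f \<longlonglongrightarrow> 0"
  by (rule tendsto_sandwich[of "\<lambda>_. 0" f sequentially g]) (use assms in auto)

lemma chain_lemma:
  fixes G :: "nat \<Rightarrow> nat \<Rightarrow> 'a \<Rightarrow> real"
  assumes "PP X" "\<And>n m. continuous_map X euclideanreal (G n m)" "\<And>n m p. 0 \<le> G n m p"
    "\<And>n p. p \<in> topspace X \<Longrightarrow> (\<lambda>m. G n m p) \<longlonglongrightarrow> 0"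
  obtains i where "strict_mono i" "\<And>p. p \<in> topspace X \<Longrightarrow> (\<lambda>t. G (i t) (i (Suc t)) p) \<longlonglongrightarrow> 0"
proof -
  define G' where "G' n m p = G n (m + Suc n) p" for n m p
  have l: "(\<lambda>m. G' n m p) \<longlonglongrightarrow> 0" if "p \<in> topspace X" for n p
    unfolding G'_def using LIMSEQ_ignore_initial_segment[OF assms(4)[OF that]] .
  obtain \<mu> where mu: "strict_mono \<mu>" "\<And>p. p \<in> topspace X \<Longrightarrow> (\<lambda>n. G' n (\<mu> n) p) \<longlonglongrightarrow> 0"
    using PP_D[of X G', OF assms(1)] assms(2,3) l unfolding G'_def by blast
  define f where "f n = \<mu> n + Suc n" for n
  define i where "i t = (f ^^ t) 0" for t
  have iS: "i (Suc t) = f (i t)" for t unfolding i_def by simp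
  have "strict_mono i" unfolding strict_mono_Suc_iff iS f_def by simp
  moreover have "(\<lambda>t. G (i t) (i (Suc t)) p) \<longlonglongrightarrow> 0" if p: "p \<in> topspace X" for p
  proof -
    have "((\<lambda>n. G' n (\<mu> n) p) \<circ> i) \<longlonglongrightarrow> 0" using LIMSEQ_subseq_LIMSEQ[OF mu(2)[OF p] \<open>strict_mono i\<close>] .
    then show ?thesis unfolding iS G'_def f_def comp_def .
  qed
  ultimately show ?thesis using that by blast
qed

lemma cp_cont: "f \<in> topspace (Cp X) \<Longrightarrow> continuous_map X euclideanreal f"
  unfolding cp_topspace by blast

lemma term_le_sum: "(k::nat) \<le> n \<Longrightarrow> \<bar>g k\<bar> \<le> (\<Sum>j\<le>n. \<bar>g j :: real\<bar>)"
  by (rule member_le_sum) auto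

lemma abs_diff_tendsto0:
  fixes a :: "nat \<Rightarrow> real"
  assumes "a \<longlonglongrightarrow> b" shows "(\<lambda>m. \<bar>a m - b\<bar>) \<longlonglongrightarrow> 0"
  using tendsto_rabs_zero[OF LIM_zero[OF assms]] .

lemma PP_a2m:
  assumes PX: "PP X" shows "alpha2m (Cp X)"
  unfolding alpha2m_def
proof (intro ballI allI impI)
  fix y and x :: "nat \<Rightarrow> nat \<Rightarrow> _"
  assume y: "y \<in> topspace (Cp X)" and xl: "\<forall>n. seq_lim (Cp X) (x n) y"
  have xall: "\<And>n. (\<forall>m. x n m \<in> topspace (Cp X) \<and> x n m \<noteq> y) \<and> (\<forall>p\<in>topspace X. (\<lambda>m. x n m p) \<longlonglongrightarrow> y p)"
    using xl seq_lim_cp_iff[OF y] by simp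
  then have xs: "\<And>n m. x n m \<in> topspace (Cp X)" "\<And>n m. x n m \<noteq> y"
    and xp: "\<And>n p. p \<in> topspace X \<Longrightarrow> (\<lambda>m. x n m p) \<longlonglongrightarrow> y p" by blast+
  define G where "G n m p = (\<Sum>k\<le>n. \<bar>x k m p - y p\<bar>)" for n m p
  have Gc: "continuous_map X euclideanreal (G n m)" for n m
    unfolding G_def
  proof (rule continuous_map_sum)
    fix k assume "k \<in> {..n}"
    have "continuous_map X euclideanreal (x k m)" "continuous_map X euclideanreal y"
      using cp_cont xs y by blast+
    then show "continuous_map X euclideanreal (\<lambda>p. \<bar>x k m p - y p\<bar>)"
      by (intro continuous_map_real_abs continuous_map_diff)
  qed simp
  have Gn: "0 \<le> G n m p" for n m p unfolding G_def by (simp add: sum_nonneg)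
  have Gl: "(\<lambda>m. G n m p) \<longlonglongrightarrow> 0" if "p \<in> topspace X" for n p
    unfolding G_def by (intro tendsto_null_sum abs_diff_tendsto0 xp that)
  obtain \<mu> where mu: "strict_mono \<mu>" "\<And>p. p \<in> topspace X \<Longrightarrow> (\<lambda>n. G n (\<mu> n) p) \<longlonglongrightarrow> 0"
    using PP_D[of X G, OF PX Gc Gn Gl] by blast
  define A where "A = (\<Union>n. {x k (\<mu> n) | k. k \<le> n})"
  have A2: "A = (\<Union>n. (\<lambda>k. x k (\<mu> n)) ` {..n})" unfolding A_def by auto
  have "conv_set (Cp X) A y"
  proof (rule conv_set_cp_I[OF y])
    show "A \<subseteq> topspace (Cp X)" unfolding A_def using xs by blast
    show "countable A" unfolding A2 by (rule countable_UN) (auto intro: countable_finite)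
    show "y \<notin> A" unfolding A_def using xs by blast
    have "seq_lim (Cp X) (x 0 \<circ> \<mu>) y" using seq_lim_subseq[OF spec[OF xl, of 0] mu(1)] .
    then have "infinite (range (x 0 \<circ> \<mu>))" using seq_lim_range_infinite[OF cp_Hausdorff y] by blast
    moreover have "range (x 0 \<circ> \<mu>) \<subseteq> A" unfolding A_def by auto
    ultimately show "infinite A" using finite_subset by blast
    fix p and e :: real assume p: "p \<in> topspace X" and e: "e > 0"
    obtain N where N: "\<And>n. n \<ge> N \<Longrightarrow> \<bar>G n (\<mu> n) p\<bar> < e"
      using mu(2)[OF p] e unfolding LIMSEQ_iff by auto
    have "{f\<in>A. \<bar>f p - y p\<bar> \<ge> e} \<subseteq> (\<Union>n<N. (\<lambda>k. x k (\<mu> n)) ` {..n})"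
    proof
      fix f assume f: "f \<in> {f\<in>A. \<bar>f p - y p\<bar> \<ge> e}"
      then obtain n k where nk: "k \<le> n" "f = x k (\<mu> n)" unfolding A_def by blast
      have "n < N"
      proof (rule ccontr)
        assume "\<not> n < N"
        then have "\<bar>G n (\<mu> n) p\<bar> < e" using N by simp
        moreover have "\<bar>f p - y p\<bar> \<le> G n (\<mu> n) p"
          unfolding G_def nk(2) using term_le_sum[OF nk(1), of "\<lambda>k. x k (\<mu> n) p - y p"] by simp
        ultimately show False using f by simp
      qed
      then show "f \<in> (\<Union>n<N. (\<lambda>k. x k (\<mu> n)) ` {..n})" using nk by blast
    qed
    moreover have "finite (\<Union>n<N. (\<lambda>k. x k (\<mu> n)) ` {..n})" by simp
    ultimately show "finite {f\<in>A. \<bar>f p - y p\<bar> \<ge> e}" using finite_subset by blast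
  qed
  then show "\<exists>m :: nat \<Rightarrow> nat. strict_mono m \<and> conv_set (Cp X) (\<Union>n. {x k (m n) | k. k \<le> n}) y"
    using mu(1) unfolding A_def by blast
qed

lemma seq_lim_cpD:
  assumes "y \<in> topspace (Cp X)" "seq_lim (Cp X) s y"
  shows "\<And>m. s m \<in> topspace (Cp X)" "\<And>m. s m \<noteq> y" "\<And>p. p \<in> topspace X \<Longrightarrow> (\<lambda>m. s m p) \<longlonglongrightarrow> y p"
  using assms seq_lim_cp_iff[OF assms(1), of s] by auto

lemma Gsum_props:
  fixes x :: "nat \<Rightarrow> nat \<Rightarrow> 'a \<Rightarrow> real" and z :: "nat \<Rightarrow> 'a \<Rightarrow> real"
  assumes xs: "\<And>n m. x n m \<in> topspace (Cp X)" and zs: "\<And>n. z n \<in> topspace (Cp X)"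
    and xp: "\<And>n p. p \<in> topspace X \<Longrightarrow> (\<lambda>m. x n m p) \<longlonglongrightarrow> z n p"
  shows "\<And>n m. continuous_map X euclideanreal (\<lambda>p. \<Sum>k\<le>n. \<bar>x k m p - z k p\<bar>)"
    "\<And>n m p. 0 \<le> (\<Sum>k\<le>n. \<bar>x k m p - z k p\<bar>)"
    "\<And>n p. p \<in> topspace X \<Longrightarrow> (\<lambda>m. \<Sum>k\<le>n. \<bar>x k m p - z k p\<bar>) \<longlonglongrightarrow> 0"
proof -
  fix n m
  show "continuous_map X euclideanreal (\<lambda>p. \<Sum>k\<le>n. \<bar>x k m p - z k p\<bar>)"
  proof (rule continuous_map_sum)
    fix k assume "k \<in> {..n}"
    have "continuous_map X euclideanreal (x k m)" "continuous_map X euclideanreal (z k)"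
      using cp_cont xs zs by blast+
    then show "continuous_map X euclideanreal (\<lambda>p. \<bar>x k m p - z k p\<bar>)"
      by (intro continuous_map_real_abs continuous_map_diff)
  qed simp
next
  fix n m p show "0 \<le> (\<Sum>k\<le>n. \<bar>x k m p - z k p\<bar>)" by (simp add: sum_nonneg)
next
  fix n p assume "p \<in> topspace X"
  then show "(\<lambda>m. \<Sum>k\<le>n. \<bar>x k m p - z k p\<bar>) \<longlonglongrightarrow> 0"
    by (intro tendsto_null_sum abs_diff_tendsto0 xp)
qed

lemma PP_LR:
  assumes PX: "PP X" shows "locally_Ramsey (Cp X)"
  unfolding locally_Ramsey_def
proof (intro ballI allI impI)
  fix y and x :: "nat \<Rightarrow> nat \<Rightarrow> _"
  assume y: "y \<in> topspace (Cp X)" and xl: "\<forall>n. seq_lim (Cp X) (x n) y"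
  have xs: "\<And>n m. x n m \<in> topspace (Cp X)" "\<And>n m. x n m \<noteq> y"
    and xp: "\<And>n p. p \<in> topspace X \<Longrightarrow> (\<lambda>m. x n m p) \<longlonglongrightarrow> y p"
    using seq_lim_cpD[OF y spec[OF xl]] by auto
  define G where "G n m p = (\<Sum>k\<le>n. \<bar>x k m p - y p\<bar>)" for n m p
  note GP = Gsum_props[of x X "\<lambda>_. y", OF xs(1) y xp]
  have Gc: "\<And>n m. continuous_map X euclideanreal (G n m)" unfolding G_def by (rule GP(1))
  have Gn: "\<And>n m p. 0 \<le> G n m p" unfolding G_def by (rule GP(2))
  have Gl: "\<And>n p. p \<in> topspace X \<Longrightarrow> (\<lambda>m. G n m p) \<longlonglongrightarrow> 0" unfolding G_def by (rule GP(3))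
  obtain i where i: "strict_mono i" "\<And>p. p \<in> topspace X \<Longrightarrow> (\<lambda>t. G (i t) (i (Suc t)) p) \<longlonglongrightarrow> 0"
    using chain_lemma[of X G, OF PX Gc Gn Gl] by blast
  define I where "I = range i"
  have Iinf: "infinite I" unfolding I_def using strict_mono_imp_inj_on[OF i(1)] range_inj_infinite by blast
  define B where "B = {x n m | n m. n \<in> I \<and> m \<in> I \<and> n < m}"
  have "conv_set (Cp X) B y"
  proof (rule conv_set_cp_I[OF y])
    show "B \<subseteq> topspace (Cp X)" unfolding B_def using xs by blast
    show "y \<notin> B" unfolding B_def using xs by blast
    have "B \<subseteq> (\<lambda>(n,m). x n m) ` UNIV" unfolding B_def by auto
    then show "countable B" by (rule countable_subset) simp
    have sm: "strict_mono (i \<circ> Suc)" using i(1) unfolding strict_mono_def by simp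
    have "seq_lim (Cp X) (x (i 0) \<circ> (i \<circ> Suc)) y" using seq_lim_subseq[OF spec[OF xl, of "i 0"] sm] .
    then have "infinite (range (x (i 0) \<circ> (i \<circ> Suc)))" using seq_lim_range_infinite[OF cp_Hausdorff y] by blast
    moreover have "range (x (i 0) \<circ> (i \<circ> Suc)) \<subseteq> B"
    proof
      fix f assume "f \<in> range (x (i 0) \<circ> (i \<circ> Suc))"
      then obtain t where t: "f = x (i 0) (i (Suc t))" by auto
      have "i 0 < i (Suc t)" using i(1) by (simp add: strict_mono_less)
      then show "f \<in> B" unfolding B_def I_def t by blast
    qed
    ultimately show "infinite B" using finite_subset by blast
    fix p and e :: real assume p: "p \<in> topspace X" and e: "e > 0"
    obtain N where N: "\<And>t. t \<ge> N \<Longrightarrow> \<bar>G (i t) (i (Suc t)) p\<bar> < e"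
      using i(2)[OF p] e unfolding LIMSEQ_iff by auto
    have "{f\<in>B. \<bar>f p - y p\<bar> \<ge> e} \<subseteq> (\<lambda>(s,t). x (i s) (i t)) ` ({..N} \<times> {..N})"
    proof
      fix f assume f: "f \<in> {f\<in>B. \<bar>f p - y p\<bar> \<ge> e}"
      then obtain s t where st: "f = x (i s) (i t)" "i s < i t" unfolding B_def I_def by blast
      have "s < t" using st(2) i(1) by (simp add: strict_mono_less)
      then obtain t' where t': "t = Suc t'" "s \<le> t'" by (cases t) auto
      have "t' < N"
      proof (rule ccontr)
        assume "\<not> t' < N"
        then have "\<bar>G (i t') (i (Suc t')) p\<bar> < e" using N by simp
        moreover have "i s \<le> i t'" using t'(2) i(1) by (simp add: strict_mono_less_eq)
        then have "\<bar>f p - y p\<bar> \<le> G (i t') (i (Suc t')) p"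
          unfolding G_def st(1) t'(1) using term_le_sum[of "i s" "i t'" "\<lambda>k. x k (i (Suc t')) p - y p"] by simp
        ultimately show False using f by simp
      qed
      then have "s \<le> N" "t \<le> N" using t' by auto
      then show "f \<in> (\<lambda>(s,t). x (i s) (i t)) ` ({..N} \<times> {..N})" using st(1) by force
    qed
    moreover have "finite ((\<lambda>(s,t). x (i s) (i t)) ` ({..N} \<times> {..N}))" by simp
    ultimately show "finite {f\<in>B. \<bar>f p - y p\<bar> \<ge> e}" using finite_subset by blast
  qed
  then show "\<exists>I :: nat set. infinite I \<and> conv_set (Cp X) {x n m | n m. n \<in> I \<and> m \<in> I \<and> n < m} y"
    using Iinf unfolding B_def by blast
qed

lemma PP_Ramsey:
  assumes PX: "PP X" shows "Ramsey (Cp X)"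
  unfolding Ramsey_def
proof (intro ballI allI impI)
  fix y and x :: "nat \<Rightarrow> nat \<Rightarrow> _" and z :: "nat \<Rightarrow> _"
  assume y: "y \<in> topspace (Cp X)" and H: "(\<forall>n. seq_lim (Cp X) (x n) (z n)) \<and> seq_lim (Cp X) z y"
  have zs: "\<And>n. z n \<in> topspace (Cp X)" and zp: "\<And>p. p \<in> topspace X \<Longrightarrow> (\<lambda>n. z n p) \<longlonglongrightarrow> y p"
    using seq_lim_cpD[OF y conjunct2[OF H]] by auto
  have xs: "\<And>n m. x n m \<in> topspace (Cp X)"
    and xp: "\<And>n p. p \<in> topspace X \<Longrightarrow> (\<lambda>m. x n m p) \<longlonglongrightarrow> z n p"
    using seq_lim_cpD[OF zs spec[OF conjunct1[OF H]]] by auto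
  define G where "G n m p = (\<Sum>k\<le>n. \<bar>x k m p - z k p\<bar>)" for n m p
  note GP = Gsum_props[of x X z, OF xs zs xp]
  have Gc: "\<And>n m. continuous_map X euclideanreal (G n m)" unfolding G_def by (rule GP(1))
  have Gn: "\<And>n m p. 0 \<le> G n m p" unfolding G_def by (rule GP(2))
  have Gl: "\<And>n p. p \<in> topspace X \<Longrightarrow> (\<lambda>m. G n m p) \<longlonglongrightarrow> 0" unfolding G_def by (rule GP(3))
  obtain i where i: "strict_mono i" "\<And>p. p \<in> topspace X \<Longrightarrow> (\<lambda>t. G (i t) (i (Suc t)) p) \<longlonglongrightarrow> 0"
    using chain_lemma[of X G, OF PX Gc Gn Gl] by blast
  define I where "I = range i"
  have Iinf: "infinite I" unfolding I_def using strict_mono_imp_inj_on[OF i(1)] range_inj_infinite by blast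
  have key: "\<exists>k. \<forall>n m. k < n \<and> n < m \<and> n \<in> I \<and> m \<in> I \<longrightarrow> \<bar>x n m p - y p\<bar> < e"
    if p: "p \<in> topspace X" and e: "e > 0" for p e
  proof -
    have e2: "e/2 > 0" using e by simp
    obtain T where T: "\<And>t. t \<ge> T \<Longrightarrow> \<bar>G (i t) (i (Suc t)) p\<bar> < e/2"
      using LIMSEQ_D[OF i(2)[OF p] e2] by auto
    obtain K where K: "\<And>n. n \<ge> K \<Longrightarrow> \<bar>z n p - y p\<bar> < e/2"
      using LIMSEQ_D[OF zp[OF p] e2] by auto
    have "\<forall>n m. K + i T < n \<and> n < m \<and> n \<in> I \<and> m \<in> I \<longrightarrow> \<bar>x n m p - y p\<bar> < e"
    proof (intro allI impI)
      fix n m assume nm: "K + i T < n \<and> n < m \<and> n \<in> I \<and> m \<in> I"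
      then obtain s t where st: "n = i s" "m = i t" unfolding I_def by blast
      have "i T < i s" using nm st by simp
      then have "T < s" using i(1) by (simp add: strict_mono_less)
      have "s < t" using nm st i(1) by (simp add: strict_mono_less)
      then obtain t' where t': "t = Suc t'" "s \<le> t'" by (cases t) auto
      have "i s \<le> i t'" using t'(2) i(1) by (simp add: strict_mono_less_eq)
      then have "\<bar>x n m p - z n p\<bar> \<le> G (i t') (i (Suc t')) p"
        unfolding G_def st t'(1) using term_le_sum[of "i s" "i t'" "\<lambda>k. x k (i (Suc t')) p - z k p"] by simp
      moreover have "\<bar>G (i t') (i (Suc t')) p\<bar> < e/2" using T \<open>T < s\<close> t'(2) by simp
      moreover have "\<bar>z n p - y p\<bar> < e/2" using K nm by simp
      ultimately show "\<bar>x n m p - y p\<bar> < e" by linarith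
    qed
    then show ?thesis by blast
  qed
  show "\<exists>I :: nat set. infinite I \<and> (\<forall>U. openin (Cp X) U \<and> y \<in> U \<longrightarrow>
           (\<exists>k. {x n m | n m. k < n \<and> n < m \<and> n \<in> I \<and> m \<in> I} \<subseteq> U))"
  proof (rule exI[of _ I], intro conjI allI impI)
    show "infinite I" by (fact Iinf)
    fix U assume U: "openin (Cp X) U \<and> y \<in> U"
    then obtain F e where F: "finite F" "F \<subseteq> topspace X" "e > 0"
       "\<forall>f\<in>topspace (Cp X). (\<forall>p\<in>F. \<bar>f p - y p\<bar> < e) \<longrightarrow> f \<in> U"
      using cp_nbhd[of X U y] U by blast
    have "\<forall>p\<in>F. \<exists>k. \<forall>n m. k < n \<and> n < m \<and> n \<in> I \<and> m \<in> I \<longrightarrow> \<bar>x n m p - y p\<bar> < e"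
    proof
      fix p assume "p \<in> F" then have "p \<in> topspace X" using F(2) by blast
      then show "\<exists>k. \<forall>n m. k < n \<and> n < m \<and> n \<in> I \<and> m \<in> I \<longrightarrow> \<bar>x n m p - y p\<bar> < e"
        using key F(3) by blast
    qed
    then obtain kk where kk: "\<And>p. p \<in> F \<Longrightarrow> \<forall>n m. kk p < n \<and> n < m \<and> n \<in> I \<and> m \<in> I \<longrightarrow> \<bar>x n m p - y p\<bar> < e"
      by metis
    define k0 where "k0 = (\<Sum>p\<in>F. kk p)"
    have kk0: "kk p \<le> k0" if "p \<in> F" for p unfolding k0_def by (rule member_le_sum) (use that F(1) in auto)
    show "\<exists>k. {x n m | n m. k < n \<and> n < m \<and> n \<in> I \<and> m \<in> I} \<subseteq> U"
    proof (intro exI subsetI)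
      fix f assume "f \<in> {x n m | n m. k0 < n \<and> n < m \<and> n \<in> I \<and> m \<in> I}"
      then obtain n m where nm: "f = x n m" "k0 < n" "n < m" "n \<in> I" "m \<in> I" by blast
      have "\<forall>p\<in>F. \<bar>f p - y p\<bar> < e"
      proof
        fix p assume pF: "p \<in> F"
        have "kk p < n" using kk0[OF pF] nm(2) by simp
        then show "\<bar>f p - y p\<bar> < e" using kk[OF pF] nm by blast
      qed
      then show "f \<in> U" using F(4) xs nm(1) by blast
    qed
  qed
qed

lemma restrict_in_cp:
  assumes "continuous_map X euclideanreal f"
  shows "restrict f (topspace X) \<in> topspace (Cp X)"
proof -
  have "continuous_map X euclideanreal (restrict f (topspace X))"
    using continuous_map_eq[OF assms, of "restrict f (topspace X)"] by simp
  then show ?thesis unfolding cp_topspace by simp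
qed

lemma cp_empty_finite:
  assumes "topspace X = {}" shows "finite (topspace (Cp X))"
proof -
  have "topspace (Cp X) \<subseteq> {\<lambda>x. undefined}" unfolding cp_topspace assms by auto
  then show ?thesis using finite_subset by blast
qed

lemma alpha4_empty:
  assumes "topspace X = {}" shows "alpha4 (Cp X)"
  unfolding alpha4_def
proof (intro ballI allI impI)
  fix y and S :: "nat \<Rightarrow> _" assume "(\<forall>n m. n \<noteq> m \<longrightarrow> S n \<inter> S m = {}) \<and> (\<forall>n. conv_set (Cp X) (S n) y)"
  then have "conv_set (Cp X) (S 0) y" by blast
  then have "infinite (S 0)" "S 0 \<subseteq> topspace (Cp X)" unfolding conv_set_def by auto
  then show "\<exists>T\<subseteq>\<Union> (range S). conv_set (Cp X) T y \<and> infinite {n. S n \<inter> T \<noteq> {}}"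
    using cp_empty_finite[OF assms] finite_subset by blast
qed

lemma finite_bad_index:
  fixes a :: "nat \<Rightarrow> real"
  assumes "a \<longlonglongrightarrow> b" "e > 0" shows "finite {m. \<bar>a m - b\<bar> \<ge> e}"
proof -
  obtain no where no: "\<forall>n\<ge>no. norm (a n - b) < e" using LIMSEQ_D[OF assms] by blast
  have "{m. \<bar>a m - b\<bar> \<ge> e} \<subseteq> {..<no}"
  proof
    fix m assume "m \<in> {m. \<bar>a m - b\<bar> \<ge> e}"
    then have "\<not> (norm (a m - b) < e)" by simp
    then have "\<not> m \<ge> no" using no by blast
    then show "m \<in> {..<no}" by simp
  qed
  then show ?thesis using finite_subset by blast
qed

lemma Ramsey_a4:
  assumes RX: "Ramsey (Cp X)" shows "alpha4 (Cp X)"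
proof (cases "topspace X = {}")
  case True then show ?thesis by (rule alpha4_empty)
next
  case False
  then obtain p0 where p0: "p0 \<in> topspace X" by blast
  show ?thesis
  unfolding alpha4_def
  proof (intro ballI allI impI)
  fix y and S :: "nat \<Rightarrow> _" assume y: "y \<in> topspace (Cp X)"
    and H: "(\<forall>n m. n \<noteq> m \<longrightarrow> S n \<inter> S m = {}) \<and> (\<forall>n. conv_set (Cp X) (S n) y)"
  have "\<forall>n. \<exists>e. inj e \<and> range e = S n \<and> seq_lim (Cp X) e y"
  proof
    fix n show "\<exists>e. inj e \<and> range e = S n \<and> seq_lim (Cp X) e y" using H by (intro conv_set_enum) blast
  qed
  from choice[OF this] obtain e where e: "\<forall>n. inj (e n) \<and> range (e n) = S n \<and> seq_lim (Cp X) (e n) y" by blast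
  then have e: "\<And>n. inj (e n)" "\<And>n. range (e n) = S n" "\<And>n. seq_lim (Cp X) (e n) y" by auto
  have es: "\<And>n m. e n m \<in> topspace (Cp X)" "\<And>n m. e n m \<noteq> y"
    and ep: "\<And>n p. p \<in> topspace X \<Longrightarrow> (\<lambda>m. e n m p) \<longlonglongrightarrow> y p"
    using seq_lim_cpD[OF y e(3)] by auto
  define c where "c n = inverse (real (Suc n))" for n
  have c0: "c n > 0" for n unfolding c_def by simp
  have cl: "c \<longlonglongrightarrow> 0" unfolding c_def by (rule LIMSEQ_inverse_real_of_nat)
  define z where "z n = restrict (\<lambda>p. y p + c n) (topspace X)" for n
  define x' where "x' n m = restrict (\<lambda>p. e n m p + c n) (topspace X)" for n m
  have yc: "continuous_map X euclideanreal y" using cp_cont[OF y] .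
  have zs: "z n \<in> topspace (Cp X)" for n
    unfolding z_def by (intro restrict_in_cp continuous_map_add yc) simp
  have xs: "x' n m \<in> topspace (Cp X)" for n m
    unfolding x'_def by (intro restrict_in_cp continuous_map_add cp_cont[OF es(1)]) simp
  have xl: "seq_lim (Cp X) (x' n) (z n)" for n
    unfolding seq_lim_cp_iff[OF zs]
  proof (intro conjI allI ballI)
    fix m show "x' n m \<in> topspace (Cp X)" by (rule xs)
    show "x' n m \<noteq> z n"
    proof
      assume eq: "x' n m = z n"
      have "e n m = y"
      proof (rule cp_ext_eq[OF es(1) y])
        fix p assume p: "p \<in> topspace X"
        have "x' n m p = z n p" using eq by simp
        then show "e n m p = y p" using p unfolding x'_def z_def by simp
      qed
      then show False using es(2) by blast
    qed
  next
    fix p assume p: "p \<in> topspace X"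
    have "(\<lambda>m. e n m p + c n) \<longlonglongrightarrow> y p + c n" by (intro tendsto_add ep p tendsto_const)
    then show "(\<lambda>m. x' n m p) \<longlonglongrightarrow> z n p" using p unfolding x'_def z_def by simp
  qed
  have zl: "seq_lim (Cp X) z y"
    unfolding seq_lim_cp_iff[OF y]
  proof (intro conjI allI ballI)
    fix n show "z n \<in> topspace (Cp X)" by (rule zs)
    show "z n \<noteq> y"
    proof
      assume "z n = y"
      then have "z n p0 = y p0" by simp
      then show False using p0 c0[of n] unfolding z_def by simp
    qed
  next
    fix p assume p: "p \<in> topspace X"
    have "(\<lambda>n. y p + c n) \<longlonglongrightarrow> y p + 0" by (intro tendsto_add cl tendsto_const)
    then show "(\<lambda>n. z n p) \<longlonglongrightarrow> y p" using p unfolding z_def by simp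
  qed
  have R: "\<forall>x z. (\<forall>n. seq_lim (Cp X) (x n) (z n)) \<and> seq_lim (Cp X) z y \<longrightarrow>
     (\<exists>I :: nat set. infinite I \<and>
        (\<forall>U. openin (Cp X) U \<and> y \<in> U \<longrightarrow>
           (\<exists>k. {x n m | n m. k < n \<and> n < m \<and> n \<in> I \<and> m \<in> I} \<subseteq> U)))"
    using RX y unfolding Ramsey_def by (rule bspec)
  have "(\<forall>n. seq_lim (Cp X) (x' n) (z n)) \<and> seq_lim (Cp X) z y" using xl zl by blast
  from mp[OF spec[OF spec[OF R, of x'], of z] this] obtain I :: "nat set" where
    I: "infinite I" "\<forall>U. openin (Cp X) U \<and> y \<in> U \<longrightarrow>
           (\<exists>k. {x' n m | n m. k < n \<and> n < m \<and> n \<in> I \<and> m \<in> I} \<subseteq> U)" by blast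
  define B where "B = {e n m | n m. n \<in> I \<and> m \<in> I \<and> n < m}"
  have bigger: "\<exists>m\<in>I. n < m" for n using I(1) by (meson infinite_nat_iff_unbounded)
  have "conv_set (Cp X) B y"
  proof (rule conv_set_cp_I[OF y])
    show "B \<subseteq> topspace (Cp X)" unfolding B_def using es by blast
    show "y \<notin> B" unfolding B_def using es by blast
    have "B \<subseteq> (\<lambda>(n,m). e n m) ` UNIV" unfolding B_def by auto
    then show "countable B" by (rule countable_subset) simp
    have "I \<noteq> {}" using I(1) by auto
    then obtain n0 where n0: "n0 \<in> I" by blast
    have inf: "infinite (I - {..n0})" by (rule Diff_infinite_finite) (simp_all add: I(1))
    have ij: "inj_on (e n0) (I - {..n0})" by (rule inj_on_subset[OF e(1)[of n0]]) simp
    have "infinite (e n0 ` (I - {..n0}))"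
    proof
      assume "finite (e n0 ` (I - {..n0}))"
      then have "finite (I - {..n0})" using finite_imageD[OF _ ij] by blast
      then show False using inf by blast
    qed
    moreover have "e n0 ` (I - {..n0}) \<subseteq> B"
    proof
      fix f assume "f \<in> e n0 ` (I - {..n0})"
      then obtain m where m: "f = e n0 m" "m \<in> I" "m \<notin> {..n0}" by blast
      then have "n0 < m" by simp
      then show "f \<in> B" unfolding B_def using n0 m by blast
    qed
    ultimately show "infinite B" using finite_subset by blast
    fix p and \<epsilon> :: real assume p: "p \<in> topspace X" and eps: "\<epsilon> > 0"
    have e2: "\<epsilon>/2 > 0" using eps by simp
    have "openin (Cp X) {f \<in> topspace (Cp X). \<bar>f p - y p\<bar> < \<epsilon>/2}" using cp_open_coord[OF p] .
    moreover have "y \<in> {f \<in> topspace (Cp X). \<bar>f p - y p\<bar> < \<epsilon>/2}" using y e2 by simp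
    ultimately obtain k where k: "{x' n m | n m. k < n \<and> n < m \<and> n \<in> I \<and> m \<in> I}
        \<subseteq> {f \<in> topspace (Cp X). \<bar>f p - y p\<bar> < \<epsilon>/2}" using I(2) by blast
    obtain N0 where N0: "\<forall>n\<ge>N0. norm (c n - 0) < \<epsilon>/2" using LIMSEQ_D[OF cl e2] by blast
    have "{f\<in>B. \<bar>f p - y p\<bar> \<ge> \<epsilon>} \<subseteq> (\<Union>n\<le>k + N0. e n ` {m. \<bar>e n m p - y p\<bar> \<ge> \<epsilon>})"
    proof
      fix f assume f: "f \<in> {f\<in>B. \<bar>f p - y p\<bar> \<ge> \<epsilon>}"
      then obtain n m where nm: "f = e n m" "n \<in> I" "m \<in> I" "n < m" unfolding B_def by blast
      have "n \<le> k + N0"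
      proof (rule ccontr)
        assume "\<not> n \<le> k + N0"
        then have nk: "k < n" "n \<ge> N0" by auto
        then have "x' n m \<in> {f \<in> topspace (Cp X). \<bar>f p - y p\<bar> < \<epsilon>/2}" using k nm by blast
        then have "\<bar>e n m p + c n - y p\<bar> < \<epsilon>/2" using p unfolding x'_def by simp
        moreover have "\<bar>c n\<bar> < \<epsilon>/2" using N0 nk by simp
        ultimately have "\<bar>e n m p - y p\<bar> < \<epsilon>" by linarith
        then show False using f nm by simp
      qed
      then show "f \<in> (\<Union>n\<le>k + N0. e n ` {m. \<bar>e n m p - y p\<bar> \<ge> \<epsilon>})" using f nm by auto
    qed
    moreover have "finite (\<Union>n\<le>k + N0. e n ` {m. \<bar>e n m p - y p\<bar> \<ge> \<epsilon>})"
      using finite_bad_index[OF ep[OF p] eps] by simp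
    ultimately show "finite {f\<in>B. \<bar>f p - y p\<bar> \<ge> \<epsilon>}" using finite_subset by blast
  qed
  moreover have "B \<subseteq> \<Union> (range S)" unfolding B_def e(2)[symmetric] by blast
  moreover have "I \<subseteq> {n. S n \<inter> B \<noteq> {}}"
  proof
    fix n assume n: "n \<in> I"
    obtain m where m: "m \<in> I" "n < m" using bigger by blast
    have "e n m \<in> S n \<inter> B" unfolding B_def e(2)[symmetric] using n m by blast
    then show "n \<in> {n. S n \<inter> B \<noteq> {}}" by blast
  qed
  then have "infinite {n. S n \<inter> B \<noteq> {}}" using I(1) finite_subset by blast
  ultimately show "\<exists>T\<subseteq>\<Union> (range S). conv_set (Cp X) T y \<and> infinite {n. S n \<inter> T \<noteq> {}}" by blast
  qed
qed

lemma lim_reindex: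
  fixes f :: "nat \<Rightarrow> real"
  assumes "f \<longlonglongrightarrow> l" "\<And>n. n \<le> \<tau> n" shows "(\<lambda>n. f (\<tau> n)) \<longlonglongrightarrow> l"
proof (rule LIMSEQ_I)
  fix r :: real assume r: "0 < r"
  obtain no where no: "\<forall>n\<ge>no. norm (f n - l) < r" using LIMSEQ_D[OF assms(1) r] by blast
  have "\<forall>n\<ge>no. norm (f (\<tau> n) - l) < r"
  proof (intro allI impI)
    fix n assume "no \<le> n" then have "no \<le> \<tau> n" using assms(2)[of n] by linarith
    then show "norm (f (\<tau> n) - l) < r" using no by blast
  qed
  then show "\<exists>no. \<forall>n\<ge>no. norm (f (\<tau> n) - l) < r" by blast
qed

definition code :: "nat \<Rightarrow> real \<Rightarrow> real" where
  "code n E = 2 powr (inverse (real (Suc (Suc n))) + of_int \<lceil>log 2 E - inverse (real (Suc (Suc n)))\<rceil>)"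

lemma code_ge: assumes "E > 0" shows "E \<le> code n E"
proof -
  define l where "l = inverse (real (Suc (Suc n)))"
  have "log 2 E \<le> l + of_int \<lceil>log 2 E - l\<rceil>" by linarith
  then have "2 powr (log 2 E) \<le> 2 powr (l + of_int \<lceil>log 2 E - l\<rceil>)" by simp
  then show ?thesis using assms unfolding code_def l_def by simp
qed

lemma code_lt: assumes "E > 0" shows "code n E < 2 * E"
proof -
  define l where "l = inverse (real (Suc (Suc n)))"
  have "l + of_int \<lceil>log 2 E - l\<rceil> < log 2 E + 1" by linarith
  then have "2 powr (l + of_int \<lceil>log 2 E - l\<rceil>) < 2 powr (log 2 E + 1)" by simp
  also have "\<dots> = 2 powr (log 2 E) * 2" by (simp add: powr_add)
  also have "\<dots> = E * 2" using assms by simp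
  finally show ?thesis unfolding code_def l_def by simp
qed

lemma code_inj: assumes "code n E = code n' E'" shows "n = n'"
proof -
  define l where "l = inverse (real (Suc (Suc n)))"
  define l' where "l' = inverse (real (Suc (Suc n')))"
  define K where "K = \<lceil>log 2 E - l\<rceil>"
  define K' where "K' = \<lceil>log 2 E' - l'\<rceil>"
  have eq: "2 powr (l + of_int K) = 2 powr (l' + of_int K')"
    using assms unfolding code_def l_def l'_def K_def K'_def by simp
  have "l + of_int K \<le> l' + of_int K'"
    using eq by (metis order_refl powr_le_cancel_iff one_less_numeral_iff semiring_norm(76))
  moreover have "l' + of_int K' \<le> l + of_int K"
    using eq by (metis order_refl powr_le_cancel_iff one_less_numeral_iff semiring_norm(76))
  ultimately have e: "l + of_int K = l' + of_int K'" by linarith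
  have l0: "0 < l" "l < 1" "0 < l'" "l' < 1" unfolding l_def l'_def by (auto simp: inverse_less_1_iff)
  have "of_int (K - K') = l' - l" using e by simp
  then have "\<bar>of_int (K - K') :: real\<bar> < 1" using l0 by linarith
  then have "K = K'" by linarith
  then have "l = l'" using e by simp
  then show ?thesis unfolding l_def l'_def by simp
qed

lemma a4_PP:
  assumes A4: "alpha4 (Cp X)" shows "PP X"
  unfolding PP_def
proof (intro allI impI)
  fix G :: "nat \<Rightarrow> nat \<Rightarrow> _ \<Rightarrow> real"
  assume GA: "(\<forall>n m. continuous_map X euclideanreal (G n m)) \<and> (\<forall>n m p. 0 \<le> G n m p) \<and>
     (\<forall>n. \<forall>p\<in>topspace X. (\<lambda>m. G n m p) \<longlonglongrightarrow> 0)"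
  have Gc: "\<And>n m. continuous_map X euclideanreal (G n m)" using GA by blast
  have Gn: "\<And>n m p. 0 \<le> G n m p" using GA by blast
  have Gl: "\<And>n p. p \<in> topspace X \<Longrightarrow> (\<lambda>m. G n m p) \<longlonglongrightarrow> 0" using GA by blast
  show "\<exists>\<mu> :: nat \<Rightarrow> nat. strict_mono \<mu> \<and> (\<forall>p\<in>topspace X. (\<lambda>n. G n (\<mu> n) p) \<longlonglongrightarrow> 0)"
  proof (cases "topspace X = {}")
    case True
    have "strict_mono (id :: nat \<Rightarrow> nat)" by (simp add: strict_mono_def)
    then show ?thesis using True by blast
  next
    case False
    then obtain p0 where p0: "p0 \<in> topspace X" by blast
    define H where "H n m p = (\<Sum>k\<le>n. \<Sum>j\<le>n. G k (m + j) p)" for n m p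
    have Hc: "continuous_map X euclideanreal (H n m)" for n m
      unfolding H_def
      by (intro continuous_map_sum) (use Gc in simp_all)
    have Hn: "0 \<le> H n m p" for n m p unfolding H_def by (intro sum_nonneg) (simp add: Gn)
    have Hl: "(\<lambda>m. H n m p) \<longlonglongrightarrow> 0" if p: "p \<in> topspace X" for n p
      unfolding H_def by (intro tendsto_null_sum LIMSEQ_ignore_initial_segment Gl p)
    have Hge: "G k (m + j) p \<le> H n m p" if "k \<le> n" "j \<le> n" for k j n m p
    proof -
      have "G k (m + j) p \<le> (\<Sum>j'\<le>n. G k (m + j') p)"
        by (rule member_le_sum) (use that Gn in auto)
      also have "\<dots> \<le> (\<Sum>k'\<le>n. \<Sum>j'\<le>n. G k' (m + j') p)"
        by (rule member_le_sum[of k _ "\<lambda>k'. \<Sum>j'\<le>n. G k' (m + j') p"]) (use that Gn in \<open>auto intro: sum_nonneg\<close>)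
      finally show ?thesis unfolding H_def .
    qed
    define E where "E n m = H n m p0 + inverse (real (Suc m))" for n m
    have E0: "E n m > 0" for n m unfolding E_def using Hn[of n m p0] by (simp add: add_nonneg_pos)
    have El: "(\<lambda>m. E n m) \<longlonglongrightarrow> 0" for n
      unfolding E_def using tendsto_add[OF Hl[OF p0] LIMSEQ_inverse_real_of_nat] by simp
    define c where "c n m = code n (E n m)" for n m
    have cE: "E n m \<le> c n m" "c n m < 2 * E n m" for n m
      unfolding c_def using code_ge[OF E0] code_lt[OF E0] by auto
    have c0: "c n m > 0" for n m using cE(1)[of n m] E0[of n m] by linarith
    have cl: "(\<lambda>m. c n m) \<longlonglongrightarrow> 0" for n
    proof (rule sandwich0)
      show "\<And>m. 0 \<le> c n m" using c0 less_imp_le by blast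
      show "\<And>m. c n m \<le> 2 * E n m" using cE(2) less_imp_le by blast
      show "(\<lambda>m. 2 * E n m) \<longlonglongrightarrow> 0" using tendsto_mult[OF tendsto_const El] by simp
    qed
    have cinj: "c n m = c n' m' \<Longrightarrow> n = n'" for n m n' m' unfolding c_def by (rule code_inj)
    define h where "h n m = restrict (\<lambda>p. \<bar>H n m p - H n m p0\<bar> + c n m) (topspace X)" for n m
    define y0 where "y0 = restrict (\<lambda>p. 0::real) (topspace X)"
    have y0s: "y0 \<in> topspace (Cp X)" unfolding y0_def by (rule restrict_in_cp) simp
    have hs: "h n m \<in> topspace (Cp X)" for n m
      unfolding h_def by (intro restrict_in_cp continuous_map_add continuous_map_real_abs continuous_map_diff Hc) simp_all
    have hp: "h n m p = \<bar>H n m p - H n m p0\<bar> + c n m" if "p \<in> topspace X" for n m p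
      unfolding h_def using that by simp
    have hp0: "h n m p0 = c n m" for n m using hp[OF p0] by simp
    have hne: "h n m \<noteq> y0" for n m
    proof
      assume "h n m = y0"
      then have "h n m p0 = y0 p0" by simp
      then show False using hp0 c0[of n m] p0 unfolding y0_def by simp
    qed
    have hl: "seq_lim (Cp X) (h n) y0" for n
      unfolding seq_lim_cp_iff[OF y0s]
    proof (intro conjI allI ballI)
      fix m show "h n m \<in> topspace (Cp X)" "h n m \<noteq> y0" using hs hne by auto
    next
      fix p assume p: "p \<in> topspace X"
      have "(\<lambda>m. \<bar>H n m p - H n m p0\<bar> + c n m) \<longlonglongrightarrow> \<bar>0 - 0\<bar> + 0"
        by (intro tendsto_add tendsto_rabs tendsto_diff Hl p p0 cl)
      then show "(\<lambda>m. h n m p) \<longlonglongrightarrow> y0 p" using p hp unfolding y0_def by simp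
    qed
    define S where "S n = range (h n)" for n
    have Sc: "conv_set (Cp X) (S n) y0" for n unfolding S_def by (rule seq_lim_conv_set[OF cp_Hausdorff y0s hl])
    have Sd: "S n \<inter> S n' = {}" if "n \<noteq> n'" for n n'
    proof (rule ccontr)
      assume "S n \<inter> S n' \<noteq> {}"
      then obtain m m' where "h n m = h n' m'" unfolding S_def by blast
      then have "h n m p0 = h n' m' p0" by simp
      then have "c n m = c n' m'" using hp0 by simp
      then show False using cinj that by blast
    qed
    have A4': "\<forall>S :: nat \<Rightarrow> _ set. (\<forall>n m. n \<noteq> m \<longrightarrow> S n \<inter> S m = {}) \<and> (\<forall>n. conv_set (Cp X) (S n) y0) \<longrightarrow>
     (\<exists>T. T \<subseteq> (\<Union>n. S n) \<and> conv_set (Cp X) T y0 \<and> infinite {n. S n \<inter> T \<noteq> {}})"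
      using A4 y0s unfolding alpha4_def by (rule bspec)
    have "(\<forall>n m. n \<noteq> m \<longrightarrow> S n \<inter> S m = {}) \<and> (\<forall>n. conv_set (Cp X) (S n) y0)" using Sd Sc by blast
    from mp[OF spec[OF A4', of S] this] obtain T where
      T: "T \<subseteq> (\<Union>n. S n)" "conv_set (Cp X) T y0" "infinite {n. S n \<inter> T \<noteq> {}}" by blast
    define N where "N = {n. S n \<inter> T \<noteq> {}}"
    define \<sigma> where "\<sigma> n = (SOME m. h n m \<in> T)" for n
    have \<sigma>T: "h n (\<sigma> n) \<in> T" if "n \<in> N" for n
    proof -
      have "\<exists>m. h n m \<in> T" using that unfolding N_def S_def by blast
      then show ?thesis unfolding \<sigma>_def by (rule someI_ex)
    qed
    define \<nu> where "\<nu> = enumerate N"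
    have Ninf: "infinite N" using T(3) unfolding N_def .
    have \<nu>N: "\<nu> t \<in> N" for t unfolding \<nu>_def by (rule enumerate_in_set[OF Ninf])
    have \<nu>m: "strict_mono \<nu>" unfolding \<nu>_def strict_mono_def using enumerate_mono[OF _ Ninf] by blast
    define s where "s t = h (\<nu> t) (\<sigma> (\<nu> t))" for t
    have sT: "range s \<subseteq> T" unfolding s_def using \<sigma>T \<nu>N by blast
    have sinj: "inj s"
    proof (rule injI)
      fix t t' assume "s t = s t'"
      then have "s t p0 = s t' p0" by simp
      then have "c (\<nu> t) (\<sigma> (\<nu> t)) = c (\<nu> t') (\<sigma> (\<nu> t'))" unfolding s_def hp0 .
      then have "\<nu> t = \<nu> t'" by (rule cinj)
      then show "t = t'" using strict_mono_eq[OF \<nu>m] by blast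
    qed
    have sl: "seq_lim (Cp X) s y0"
      unfolding seq_lim_def
    proof (rule conjI)
      show "\<forall>m. s m \<in> topspace (Cp X) \<and> s m \<noteq> y0" unfolding s_def using hs hne by blast
      show "\<forall>U. openin (Cp X) U \<and> y0 \<in> U \<longrightarrow> (\<forall>\<^sub>F m in sequentially. s m \<in> U)"
        using conv_set_inj_eventually[OF T(2) sinj sT] by blast
    qed
    have sp: "(\<lambda>t. s t p) \<longlonglongrightarrow> 0" if p: "p \<in> topspace X" for p
      using seq_lim_cpD(3)[OF y0s sl p] p unfolding y0_def by simp
    define \<mu>' where "\<mu>' t = \<sigma> (\<nu> t)" for t
    define A where "A t p = H (\<nu> t) (\<mu>' t) p" for t p
    have Al: "(\<lambda>t. A t p) \<longlonglongrightarrow> 0" if p: "p \<in> topspace X" for p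
    proof (rule sandwich0)
      show "\<And>t. 0 \<le> A t p" unfolding A_def by (rule Hn)
      show "(\<lambda>t. s t p) \<longlonglongrightarrow> 0" by (rule sp[OF p])
      fix t
      have "H (\<nu> t) (\<mu>' t) p0 \<le> c (\<nu> t) (\<mu>' t)"
      proof -
        have "0 \<le> inverse (real (Suc (\<mu>' t)))" by simp
        then show ?thesis using cE(1)[of "\<nu> t" "\<mu>' t"] unfolding E_def by linarith
      qed
      then show "A t p \<le> s t p" unfolding A_def s_def hp[OF p] \<mu>'_def by simp
    qed
    define v where "v n = (LEAST v. \<exists>t. n \<le> t \<and> \<mu>' t = v)" for n
    have hv: "\<exists>t. n \<le> t \<and> \<mu>' t = v n" for n
      unfolding v_def by (rule LeastI_ex) blast
    define \<tau> where "\<tau> n = (SOME t. n \<le> t \<and> \<mu>' t = v n)" for n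
    have \<tau>: "n \<le> \<tau> n" "\<mu>' (\<tau> n) = v n" for n
      using someI_ex[OF hv[of n]] unfolding \<tau>_def by auto
    have vmono: "v n \<le> v (Suc n)" for n
    proof -
      obtain t where t: "Suc n \<le> t" "\<mu>' t = v (Suc n)" using hv by blast
      then have "\<exists>t. n \<le> t \<and> \<mu>' t = v (Suc n)" by (intro exI[of _ t]) simp
      then show ?thesis unfolding v_def[of n] by (rule Least_le)
    qed
    define \<mu> where "\<mu> n = v n + n" for n
    have "strict_mono \<mu>" unfolding strict_mono_Suc_iff \<mu>_def
    proof
      fix n show "v n + n < v (Suc n) + Suc n" using vmono[of n] by linarith
    qed
    moreover have "(\<lambda>n. G n (\<mu> n) p) \<longlonglongrightarrow> 0" if p: "p \<in> topspace X" for p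
    proof (rule sandwich0)
      show "\<And>n. 0 \<le> G n (\<mu> n) p" by (rule Gn)
      show "(\<lambda>n. A (\<tau> n) p) \<longlonglongrightarrow> 0" by (rule lim_reindex[OF Al[OF p] \<tau>(1)])
      fix n
      have "n \<le> \<nu> (\<tau> n)" using \<tau>(1)[of n] seq_suble[OF \<nu>m, of "\<tau> n"] by linarith
      then have "G n (v n + n) p \<le> H (\<nu> (\<tau> n)) (v n) p" by (intro Hge) auto
      then show "G n (\<mu> n) p \<le> A (\<tau> n) p" unfolding A_def \<mu>_def \<tau>(2) .
    qed
    ultimately show ?thesis by blast
  qed
qed

theorem corollary2p8:
  fixes X :: "'a topology"
  shows "(alpha2m (Cp X) \<longleftrightarrow> alpha2 (Cp X)) \<and>
         (alpha2 (Cp X) \<longleftrightarrow> alpha3m (Cp X)) \<and>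
         (alpha3m (Cp X) \<longleftrightarrow> alpha3 (Cp X)) \<and>
         (alpha3 (Cp X) \<longleftrightarrow> alpha4 (Cp X)) \<and>
         (alpha4 (Cp X) \<longleftrightarrow> locally_Ramsey (Cp X)) \<and>
         (locally_Ramsey (Cp X) \<longleftrightarrow> Ramsey (Cp X))"
proof -
  have i1: "alpha2m (Cp X) \<longleftrightarrow> alpha4 (Cp X)"
    using PP_a2m[OF a4_PP] a3_a4[OF a2_a3[OF a2m_a2]] by blast
  have i2: "alpha2 (Cp X) \<longleftrightarrow> alpha4 (Cp X)"
    using a2m_a2[OF PP_a2m[OF a4_PP]] a3_a4[OF a2_a3] by blast
  have i3: "alpha3m (Cp X) \<longleftrightarrow> alpha4 (Cp X)"
    using LR_a3m[OF PP_LR[OF a4_PP]] a3m_a4 by blast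
  have i4: "alpha3 (Cp X) \<longleftrightarrow> alpha4 (Cp X)"
    using a2_a3[OF a2m_a2[OF PP_a2m[OF a4_PP]]] a3_a4 by blast
  have i5: "locally_Ramsey (Cp X) \<longleftrightarrow> alpha4 (Cp X)"
    using PP_LR[OF a4_PP] a3m_a4[OF LR_a3m] by blast
  have i6: "Ramsey (Cp X) \<longleftrightarrow> alpha4 (Cp X)"
    using PP_Ramsey[OF a4_PP] Ramsey_a4 by blast
  show ?thesis using i1 i2 i3 i4 i5 i6 by blast
qed

end
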